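(* Let $L_1$ and $L_2$ be ladders in the triangular lattice with $n_1$ and $n_2$ vertices respectively, where $n_1>n_2>1$. Then $$2^{n_1-n_2}\,\tau(L_2)\ \le\ \tau(L_1)\ \le\ 3^{n_1-n_2}\,\tau(L_2).$$
   Context: The triangular lattice is the infinite planar graph whose vertices are the points $a(1,0)+b(1/2,\sqrt3/2)$, $a,b\in\mathbb Z$, with edges between points at distance 1. A ladder is the induced subgraph of the triangular lattice on the vertices of two consecutive segments lying on two adjacent parallel lattice lines, such that each endpoint of one segment is adjacent to an endpoint of the other segment. Equivalently, a ladder with $s$ vertices is isomorphic to the graph on $v_1,\dots,v_s$ with edges $v_iv_{i+1}$ and $v_iv_{i+2}$ (the square of a path). $\tau(H)$ denotes the number of spanning trees of $H$. *)

theory Defs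
  imports Main
begin

definition adj_rel :: "'a set set \<Rightarrow> ('a \<times> 'a) set" where
  "adj_rel T = {(u, v). {u, v} \<in> T \<and> u \<noteq> v}"

definition connected_via :: "'a set \<Rightarrow> 'a set set \<Rightarrow> bool" where
  "connected_via V T \<longleftrightarrow> (\<forall>u\<in>V. \<forall>v\<in>V. (u, v) \<in> (adj_rel T)\<^sup>*)"

definition has_cycle :: "'a set set \<Rightarrow> bool" where
  "has_cycle T \<longleftrightarrow> (\<exists>xs. length xs \<ge> 3 \<and> distinct xs \<and>
      (\<forall>i < length xs. {xs ! i, xs ! ((i + 1) mod length xs)} \<in> T))"

definition spanning_tree :: "'a set \<Rightarrow> 'a set set \<Rightarrow> 'a set set \<Rightarrow> bool" where
  "spanning_tree V E T \<longleftrightarrow> T \<subseteq> E \<and> connected_via V T \<and> \<not> has_cycle T"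

definition num_spanning_trees :: "'a set \<Rightarrow> 'a set set \<Rightarrow> nat" where
  "num_spanning_trees V E = card {T. spanning_tree V E T}"

text \<open>The ladder with s vertices: the square of the path v_0,...,v_{s-1}.\<close>
definition ladder_vertices :: "nat \<Rightarrow> nat set" where
  "ladder_vertices s = {..<s}"

definition ladder_edges :: "nat \<Rightarrow> nat set set" where
  "ladder_edges s = {{i, j} | i j. i < s \<and> j < s \<and> (j = i + 1 \<or> j = i + 2)}"

definition tau_ladder :: "nat \<Rightarrow> nat" where
  "tau_ladder s = num_spanning_trees (ladder_vertices s) (ladder_edges s)"

end

theory Submission
  imports Defs
begin


definition cyc :: "'a set set \<Rightarrow> 'a list \<Rightarrow> bool" where
  "cyc T xs \<longleftrightarrow> length xs \<ge> 3 \<and> distinct xs \<and>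
      (\<forall>i < length xs. {xs ! i, xs ! ((i + 1) mod length xs)} \<in> T)"

lemma has_cycle_cyc: "has_cycle T \<longleftrightarrow> (\<exists>xs. cyc T xs)"
  unfolding has_cycle_def cyc_def by blast

lemma has_cycle_mono: "has_cycle T \<Longrightarrow> T \<subseteq> T' \<Longrightarrow> has_cycle T'"
proof -
  assume "has_cycle T" "T \<subseteq> T'"
  then obtain xs where "cyc T xs" by (auto simp: has_cycle_cyc)
  then have "cyc T' xs" using \<open>T \<subseteq> T'\<close> unfolding cyc_def by auto
  then show ?thesis by (auto simp: has_cycle_cyc)
qed

lemma adj_rel_mono: "T \<subseteq> T' \<Longrightarrow> adj_rel T \<subseteq> adj_rel T'"
  unfolding adj_rel_def by auto

lemma rtrancl_adj_mono: "T \<subseteq> T' \<Longrightarrow> (u,v) \<in> (adj_rel T)\<^sup>* \<Longrightarrow> (u,v) \<in> (adj_rel T')\<^sup>*"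
  by (meson adj_rel_mono rtrancl_mono subsetD)

lemma adj_edge: "{u,v} \<in> T \<Longrightarrow> u \<noteq> v \<Longrightarrow> (u,v) \<in> (adj_rel T)\<^sup>*"
  by (intro r_into_rtrancl) (simp add: adj_rel_def)

lemma adj_edge': "{u,v} \<in> T \<Longrightarrow> u \<noteq> v \<Longrightarrow> (v,u) \<in> (adj_rel T)\<^sup>*"
  by (intro r_into_rtrancl) (simp add: adj_rel_def insert_commute)

lemma cyc_rotate:
  assumes "cyc T xs" shows "cyc T (rotate k xs)"
proof -
  let ?L = "length xs"
  have L: "?L \<ge> 3" using assms by (simp add: cyc_def)
  have "{rotate k xs ! i, rotate k xs ! ((i + 1) mod ?L)} \<in> T" if "i < ?L" for i
  proof -
    define i' where "i' = (k + i) mod ?L"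
    have L0: "0 < ?L" using L by linarith
    have i': "i' < ?L" using L0 by (simp add: i'_def)
    have e: "{xs ! i', xs ! ((i' + 1) mod ?L)} \<in> T" using assms i' by (simp add: cyc_def)
    have 1: "rotate k xs ! i = xs ! i'" using that by (simp add: nth_rotate i'_def)
    have 2: "rotate k xs ! ((i + 1) mod ?L) = xs ! ((k + (i + 1) mod ?L) mod ?L)"
      using L0 by (simp add: nth_rotate)
    have 3: "(k + (i + 1) mod ?L) mod ?L = (i' + 1) mod ?L"
    proof -
      have a: "(k + (i + 1) mod ?L) mod ?L = (k + (i + 1)) mod ?L" by (rule mod_add_right_eq)
      have b: "((k + i) mod ?L + 1) mod ?L = (k + i + 1) mod ?L" by (rule mod_add_left_eq)
      show ?thesis unfolding i'_def using a b by (simp add: add.assoc)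
    qed
    show ?thesis using e 1 2 3 by simp
  qed
  moreover have "distinct (rotate k xs)" using assms by (simp add: cyc_def)
  ultimately show ?thesis using L unfolding cyc_def length_rotate by blast
qed

lemma triangle:
  assumes "{a,b} \<in> T" "{b,c} \<in> T" "{c,a} \<in> T" "distinct [a,b,c]"
  shows "has_cycle T"
proof -
  have "{[a,b,c] ! i, [a,b,c] ! ((i + 1) mod length [a,b,c])} \<in> T" if "i < length [a,b,c]" for i
  proof -
    have "i = 0 \<or> i = 1 \<or> i = 2" using that by auto
    then show ?thesis using assms by auto
  qed
  then have "cyc T [a,b,c]" using assms(4) unfolding cyc_def by simp
  then show ?thesis by (auto simp: has_cycle_cyc)
qed

lemma has_edge: "(u,v) \<in> (adj_rel T)\<^sup>* \<Longrightarrow> u \<noteq> v \<Longrightarrow> \<exists>w. {u,w} \<in> T \<and> u \<noteq> w"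
  by (erule converse_rtranclE) (auto simp: adj_rel_def)

lemma pendant_add:
  assumes conn: "connected_via V T" and acyc: "\<not> has_cycle T"
    and x: "x \<notin> \<Union>T" "x \<notin> V" and y: "y \<in> V"
  shows "connected_via (insert x V) (insert {y,x} T) \<and> \<not> has_cycle (insert {y,x} T)"
proof
  let ?T = "insert {y,x} T"
  have xy: "x \<noteq> y" using x y by auto
  have m: "(u,v) \<in> (adj_rel T)\<^sup>* \<Longrightarrow> (u,v) \<in> (adj_rel ?T)\<^sup>*" for u v
    using rtrancl_adj_mono[of T ?T] by blast
  have yx: "(y,x) \<in> (adj_rel ?T)\<^sup>*" "(x,y) \<in> (adj_rel ?T)\<^sup>*"
    using adj_edge[of y x ?T] adj_edge'[of y x ?T] xy by auto
  show "connected_via (insert x V) ?T"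
    unfolding connected_via_def
  proof (intro ballI)
    fix u v assume u: "u \<in> insert x V" and v: "v \<in> insert x V"
    have uy: "(u,y) \<in> (adj_rel ?T)\<^sup>*"
      using u yx m conn y unfolding connected_via_def by auto
    have yv: "(y,v) \<in> (adj_rel ?T)\<^sup>*"
      using v yx m conn y unfolding connected_via_def by auto
    show "(u,v) \<in> (adj_rel ?T)\<^sup>*" using uy yv by simp
  qed
  show "\<not> has_cycle ?T"
  proof
    assume "has_cycle ?T"
    then obtain xs where c: "cyc ?T xs" by (auto simp: has_cycle_cyc)
    let ?L = "length xs"
    have L: "?L \<ge> 3" and d: "distinct xs" and e: "\<And>i. i < ?L \<Longrightarrow> {xs ! i, xs ! ((i + 1) mod ?L)} \<in> ?T"
      using c by (auto simp: cyc_def)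
    show False
    proof (cases "x \<in> set xs")
      case False
      have "{xs ! i, xs ! ((i + 1) mod ?L)} \<in> T" if "i < ?L" for i
      proof -
        have "xs ! i \<noteq> x" using False that by auto
        moreover have "xs ! ((i + 1) mod ?L) \<noteq> x"
        proof -
          have "0 < ?L" using L by linarith
          then have "(i + 1) mod ?L < ?L" by simp
          then show ?thesis using False nth_mem by blast
        qed
        ultimately show ?thesis using e[OF that] by (auto simp: doubleton_eq_iff)
      qed
      then have "cyc T xs" using L d by (simp add: cyc_def)
      then show False using acyc by (auto simp: has_cycle_cyc)
    next
      case True
      then obtain i where i: "i < ?L" "xs ! i = x" by (auto simp: in_set_conv_nth)
      define p where "p = (if i + 1 < ?L then i + 1 else 0)"
      define q where "q = (if i = 0 then ?L - 1 else i - 1)"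
      have p: "p < ?L" and q: "q < ?L" using L i by (auto simp: p_def q_def)
      have pm: "(i + 1) mod ?L = p"
      proof (cases "i + 1 < ?L")
        case True
        then show ?thesis by (simp add: p_def)
      next
        case False
        then have "i + 1 = ?L" using i by linarith
        then show ?thesis by (simp add: p_def)
      qed
      have qi: "(q + 1) mod ?L = i" using i L by (auto simp: q_def)
      have pq: "p \<noteq> q" using i L by (auto simp: p_def q_def)
      have pi: "p \<noteq> i" using i L by (auto simp: p_def)
      have qi': "q \<noteq> i" using i L by (auto simp: q_def)
      have e1: "{x, xs ! p} \<in> ?T" using e[OF i(1)] i(2) pm by simp
      have e2: "{xs ! q, x} \<in> ?T" using e[OF q] qi i(2) by simp
      have np: "xs ! p \<noteq> x" using d pi p i by (metis nth_eq_iff_index_eq)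
      have nq: "xs ! q \<noteq> x" using d qi' q i by (metis nth_eq_iff_index_eq)
      have "xs ! p = y" using e1 np x(1) by (auto simp: doubleton_eq_iff)
      moreover have "xs ! q = y" using e2 nq x(1) by (auto simp: doubleton_eq_iff)
      ultimately show False using d pq p q by (metis nth_eq_iff_index_eq)
    qed
  qed
qed



lemma conn_remove:
  assumes "(u,v) \<in> (adj_rel T)\<^sup>*" "u \<noteq> x" "\<forall>e\<in>T. x \<in> e \<longrightarrow> e = {y,x}"
  shows "(v \<noteq> x \<longrightarrow> (u,v) \<in> (adj_rel (T - {{y,x}}))\<^sup>*) \<and>
         (v = x \<longrightarrow> (u,y) \<in> (adj_rel (T - {{y,x}}))\<^sup>*)"
  using assms(1)
proof (induction rule: rtrancl_induct)
  case base
  then show ?case using assms(2) by simp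
next
  case (step v w)
  have vw: "{v,w} \<in> T" "v \<noteq> w" using step(2) by (auto simp: adj_rel_def)
  show ?case
  proof (cases "w = x")
    case True
    then have "{v,x} = {y,x}" using vw assms(3) by auto
    then have "v = y" using vw True by (auto simp: doubleton_eq_iff)
    then show ?thesis using step(3) vw True by auto
  next
    case wx: False
    show ?thesis
    proof (cases "v = x")
      case True
      then have "{x,w} = {y,x}" using vw assms(3) by auto
      then have "w = y" using vw True by (auto simp: doubleton_eq_iff)
      then show ?thesis using step(3) True wx by auto
    next
      case False
      then have "{v,w} \<noteq> {y,x}" using wx by (auto simp: doubleton_eq_iff)
      then have "{v,w} \<in> T - {{y,x}}" using vw by auto
      then have "(v,w) \<in> adj_rel (T - {{y,x}})" using vw by (simp add: adj_rel_def)
      then show ?thesis using step(3) False wx by auto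
    qed
  qed
qed

lemma pendant_remove:
  assumes conn: "connected_via (insert x V) T" and acyc: "\<not> has_cycle T"
    and x: "x \<notin> V" and edges: "\<forall>e\<in>T. x \<in> e \<longrightarrow> e = {y,x}"
  shows "connected_via V (T - {{y,x}}) \<and> \<not> has_cycle (T - {{y,x}})"
proof
  show "\<not> has_cycle (T - {{y,x}})" using acyc has_cycle_mono by blast
  show "connected_via V (T - {{y,x}})"
    unfolding connected_via_def
  proof (intro ballI)
    fix u v assume u: "u \<in> V" and v: "v \<in> V"
    have "(u,v) \<in> (adj_rel T)\<^sup>*" using conn u v unfolding connected_via_def by blast
    moreover have "u \<noteq> x" "v \<noteq> x" using u v x by auto
    ultimately show "(u,v) \<in> (adj_rel (T - {{y,x}}))\<^sup>*" using conn_remove[OF _ _ edges] by blast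
  qed
qed

lemma conn_deg2:
  assumes "(u,v) \<in> (adj_rel T)\<^sup>*" "u \<noteq> x" "\<forall>e\<in>T. x \<in> e \<longrightarrow> e = {a,x} \<or> e = {b,x}"
    "a \<noteq> x" "b \<noteq> x" "a \<noteq> b"
  shows "(v \<noteq> x \<longrightarrow> (u,v) \<in> (adj_rel (insert {a,b} (T - {{a,x},{b,x}})))\<^sup>*) \<and>
         (v = x \<longrightarrow> (u,a) \<in> (adj_rel (insert {a,b} (T - {{a,x},{b,x}})))\<^sup>* \<and>
                    (u,b) \<in> (adj_rel (insert {a,b} (T - {{a,x},{b,x}})))\<^sup>*)"
  using assms(1)
proof (induction rule: rtrancl_induct)
  case base
  then show ?case using assms(2) by simp
next
  case (step v w)
  let ?S = "insert {a,b} (T - {{a,x},{b,x}})"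
  have ab: "(a,b) \<in> adj_rel ?S" "(b,a) \<in> adj_rel ?S" using assms(6)
    by (auto simp: adj_rel_def insert_commute)
  have vw: "{v,w} \<in> T" "v \<noteq> w" using step(2) by (auto simp: adj_rel_def)
  show ?case
  proof (cases "w = x")
    case True
    then have "{v,x} = {a,x} \<or> {v,x} = {b,x}" using vw assms(3) by auto
    then have "v = a \<or> v = b" using vw True by (auto simp: doubleton_eq_iff)
    moreover have "(u,v) \<in> (adj_rel ?S)\<^sup>*" using step(3) vw True by auto
    ultimately show ?thesis using True ab
      by (meson rtrancl.rtrancl_into_rtrancl)
  next
    case wx: False
    show ?thesis
    proof (cases "v = x")
      case True
      then have "{x,w} = {a,x} \<or> {x,w} = {b,x}" using vw assms(3) by auto
      then have "w = a \<or> w = b" using vw True by (auto simp: doubleton_eq_iff)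
      then show ?thesis using step(3) True wx by auto
    next
      case False
      then have "{v,w} \<noteq> {a,x}" "{v,w} \<noteq> {b,x}" using wx by (auto simp: doubleton_eq_iff)
      then have "{v,w} \<in> ?S" using vw by auto
      then have "(v,w) \<in> adj_rel ?S" using vw by (simp add: adj_rel_def)
      then show ?thesis using step(3) False wx by auto
    qed
  qed
qed

lemma deg2:
  assumes conn: "connected_via (insert x V) T" and acyc: "\<not> has_cycle T"
    and x: "x \<notin> V" and edges: "\<forall>e\<in>T. x \<in> e \<longrightarrow> e = {a,x} \<or> e = {b,x}"
    and a: "a \<in> V" and b: "b \<in> V" and ab: "a \<noteq> b"
    and ea: "{a,x} \<in> T" and eb: "{b,x} \<in> T"
  shows "connected_via V (insert {a,b} (T - {{a,x},{b,x}})) \<and>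
         \<not> has_cycle (insert {a,b} (T - {{a,x},{b,x}}))"
proof
  let ?S = "insert {a,b} (T - {{a,x},{b,x}})"
  have ax: "a \<noteq> x" and bx: "b \<noteq> x" using a b x by auto
  show "connected_via V ?S"
    unfolding connected_via_def
  proof (intro ballI)
    fix u v assume u: "u \<in> V" and v: "v \<in> V"
    have "(u,v) \<in> (adj_rel T)\<^sup>*" using conn u v unfolding connected_via_def by blast
    moreover have "u \<noteq> x" "v \<noteq> x" using u v x by auto
    ultimately show "(u,v) \<in> (adj_rel ?S)\<^sup>*" using conn_deg2[OF _ _ edges ax bx ab] by blast
  qed
  have nox: "x \<notin> e" if "e \<in> ?S" for e
    using that edges ax bx by auto
  show "\<not> has_cycle ?S"
  proof
    assume "has_cycle ?S"
    then obtain xs where c: "cyc ?S xs" by (auto simp: has_cycle_cyc)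
    let ?L = "length xs"
    have L: "?L \<ge> 3" using c by (simp add: cyc_def)
    show False
    proof (cases "\<exists>i < ?L. {xs ! i, xs ! ((i + 1) mod ?L)} = {a,b}")
      case False
      have "{xs ! i, xs ! ((i + 1) mod ?L)} \<in> T" if "i < ?L" for i
        using c that False unfolding cyc_def by auto
      then have "cyc T xs" using c unfolding cyc_def by auto
      then show False using acyc by (auto simp: has_cycle_cyc)
    next
      case True
      then obtain i where i: "i < ?L" "{xs ! i, xs ! ((i + 1) mod ?L)} = {a,b}" by blast
      define ys where "ys = rotate (Suc i) xs"
      have cy: "cyc ?S ys" unfolding ys_def using cyc_rotate[OF c] .
      have Ly: "length ys = ?L" by (simp add: ys_def)
      have L0: "0 < ?L" using L by linarith
      have y0: "ys ! 0 = xs ! ((i + 1) mod ?L)" unfolding ys_def using nth_rotate[of 0 xs "Suc i"] L0 by simp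
      have "ys ! (?L - 1) = xs ! ((Suc i + (?L - 1)) mod ?L)"
        unfolding ys_def by (rule nth_rotate) (use L0 in linarith)
      also have "(Suc i + (?L - 1)) mod ?L = i" using L0 i(1)
        by (metis Suc_pred' add_Suc_shift mod_add_self2 mod_less)
      finally have yL: "ys ! (?L - 1) = xs ! i" .
      have yab: "{ys ! (?L - 1), ys ! 0} = {a,b}" using i(2) y0 yL by simp
      have dy: "distinct ys" and ey: "\<And>j. j < ?L \<Longrightarrow> {ys ! j, ys ! ((j + 1) mod ?L)} \<in> ?S"
        using cy Ly unfolding cyc_def by auto
      have xny: "x \<notin> set ys"
      proof
        assume "x \<in> set ys"
        then obtain j where j: "j < ?L" "ys ! j = x" using Ly by (auto simp: in_set_conv_nth)
        then show False using ey[OF j(1)] nox by auto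
      qed
      define zs where "zs = ys @ [x]"
      have Lz: "length zs = ?L + 1" by (simp add: zs_def Ly)
      have dz: "distinct zs" using dy xny by (simp add: zs_def)
      have ez: "{zs ! j, zs ! ((j + 1) mod length zs)} \<in> T" if j: "j < length zs" for j
      proof -
        consider "j < ?L - 1" | "j = ?L - 1" | "j = ?L" using j Lz by linarith
        then show ?thesis
        proof cases
          case 1
          have m: "(j + 1) mod ?L = j + 1" using 1 by simp
          have m2: "(j + 1) mod length zs = j + 1" using 1 Lz by simp
          have e: "{ys ! j, ys ! (j + 1)} \<in> ?S" using ey[of j] 1 m by simp
          have zj: "zs ! j = ys ! j" "zs ! (j + 1) = ys ! (j + 1)" using 1 Ly by (auto simp: zs_def nth_append)
          have ne: "{ys ! j, ys ! (j + 1)} \<noteq> {a,b}"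
          proof
            assume "{ys ! j, ys ! (j + 1)} = {a,b}"
            then have eq: "{ys ! j, ys ! (j + 1)} = {ys ! (?L - 1), ys ! 0}" using yab by simp
            have "j \<noteq> ?L - 1" using 1 by simp
            then have "ys ! j \<noteq> ys ! (?L - 1)" using dy Ly 1 L0 by (simp add: nth_eq_iff_index_eq)
            then have "ys ! j = ys ! 0" using eq by (auto simp: doubleton_eq_iff)
            then have j0: "j = 0" using dy Ly 1 L0 by (simp add: nth_eq_iff_index_eq)
            have "ys ! (j + 1) \<noteq> ys ! 0" using dy Ly 1 L0 by (simp add: nth_eq_iff_index_eq)
            then have "ys ! (j + 1) = ys ! (?L - 1)" using eq by (auto simp: doubleton_eq_iff)
            then have "j + 1 = ?L - 1" using dy Ly 1 L0 by (simp add: nth_eq_iff_index_eq)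
            then show False using j0 L by simp
          qed
          have "{ys ! j, ys ! (j + 1)} \<in> T" using e ne by auto
          then show ?thesis using zj m2 by simp
        next
          case 2
          have z1: "zs ! j = ys ! (?L - 1)" using 2 L0 Ly by (simp add: zs_def nth_append)
          have z2: "zs ! ((j + 1) mod length zs) = x" using 2 L0 Ly Lz by (simp add: zs_def nth_append)
          have "ys ! (?L - 1) = a \<or> ys ! (?L - 1) = b" using yab by (auto simp: doubleton_eq_iff)
          then have "{ys ! (?L - 1), x} \<in> T" using ea eb by auto
          then show ?thesis using z1 z2 by simp
        next
          case 3
          have z1: "zs ! j = x" using 3 Ly by (simp add: zs_def nth_append)
          have z2: "zs ! ((j + 1) mod length zs) = ys ! 0" using 3 L0 Ly Lz by (simp add: zs_def nth_append)
          have "ys ! 0 = a \<or> ys ! 0 = b" using yab by (auto simp: doubleton_eq_iff)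
          then have "{x, ys ! 0} \<in> T" using ea eb by (auto simp: insert_commute)
          then show ?thesis using z1 z2 by simp
        qed
      qed
      have "cyc T zs" using Lz L dz ez unfolding cyc_def by auto
      then show False using acyc by (auto simp: has_cycle_cyc)
    qed
  qed
qed



abbreviation ST :: "nat \<Rightarrow> nat set set set" where
  "ST n \<equiv> {T. spanning_tree (ladder_vertices n) (ladder_edges n) T}"

lemma tau_card: "tau_ladder n = card (ST n)"
  by (simp add: tau_ladder_def num_spanning_trees_def)

lemma le_mem: "e \<in> ladder_edges n \<Longrightarrow> v \<in> e \<Longrightarrow> v < n"
  unfolding ladder_edges_def by auto

lemma edges_Suc:
  assumes "2 \<le> n"
  shows "ladder_edges (Suc n) = insert {n-1,n} (insert {n-2,n} (ladder_edges n))"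
proof
  show "ladder_edges (Suc n) \<subseteq> insert {n-1,n} (insert {n-2,n} (ladder_edges n))"
  proof
    fix e assume "e \<in> ladder_edges (Suc n)"
    then obtain i j where e: "e = {i,j}" "i < Suc n" "j < Suc n" "j = i + 1 \<or> j = i + 2"
      unfolding ladder_edges_def by blast
    show "e \<in> insert {n-1,n} (insert {n-2,n} (ladder_edges n))"
    proof (cases "j < n")
      case True
      then have "i < n" using e(4) by linarith
      then have "e \<in> ladder_edges n" using e True unfolding ladder_edges_def by blast
      then show ?thesis by (rule insertI2[OF insertI2])
    next
      case False
      then have jn: "j = n" using e(3) by linarith
      then have "i = n - 1 \<or> i = n - 2" using e(4) by linarith
      then have "e = {n-1,n} \<or> e = {n-2,n}" using e(1) jn by blast
      then show ?thesis by blast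
    qed
  qed
  have 1: "{n-1,n} \<in> ladder_edges (Suc n)" unfolding ladder_edges_def
  proof (intro CollectI exI conjI)
    show "{n-1,n} = {n-1,n}" by (rule refl)
  qed (use assms in linarith)+
  have 2: "{n-2,n} \<in> ladder_edges (Suc n)" unfolding ladder_edges_def
  proof (intro CollectI exI conjI)
    show "{n-2,n} = {n-2,n}" by (rule refl)
  qed (use assms in linarith)+
  have 3: "ladder_edges n \<subseteq> ladder_edges (Suc n)"
  proof
    fix e assume "e \<in> ladder_edges n"
    then obtain i j where e: "e = {i,j}" "i < n" "j < n" "j = i + 1 \<or> j = i + 2"
      unfolding ladder_edges_def by blast
    then have "i < Suc n" "j < Suc n" by linarith+
    then show "e \<in> ladder_edges (Suc n)" using e unfolding ladder_edges_def by blast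
  qed
  show "insert {n-1,n} (insert {n-2,n} (ladder_edges n)) \<subseteq> ladder_edges (Suc n)"
    using 1 2 3 by blast
qed

lemma edge_mid: "2 \<le> n \<Longrightarrow> {n-1,n-2} \<in> ladder_edges n"
  unfolding ladder_edges_def
  by (intro CollectI exI[of _ "n-2"] exI[of _ "n-1"]) (auto simp: insert_commute)

lemma finite_edges: "finite (ladder_edges n)"
proof -
  have "ladder_edges n \<subseteq> (\<lambda>(i,j). {i,j}) ` ({..<n} \<times> {..<n})"
    unfolding ladder_edges_def by auto
  then show ?thesis by (rule finite_subset) auto
qed

lemma finite_ST: "finite (ST n)"
proof -
  have "ST n \<subseteq> Pow (ladder_edges n)" by (auto simp: spanning_tree_def)
  then show ?thesis using finite_edges by (meson finite_Pow_iff finite_subset)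
qed

lemma verts_Suc: "ladder_vertices (Suc n) = insert n (ladder_vertices n)"
  by (auto simp: ladder_vertices_def)

lemma n_notin: "n \<notin> \<Union>(ladder_edges n)"
  using le_mem by blast

lemma add_ok:
  assumes n: "2 \<le> n" and S: "S \<in> ST n" and y: "y = n - 1 \<or> y = n - 2"
  shows "insert {y,n} S \<in> ST (Suc n)"
proof -
  have sub: "S \<subseteq> ladder_edges n" and c: "connected_via (ladder_vertices n) S"
    and a: "\<not> has_cycle S" using S by (auto simp: spanning_tree_def)
  have "n \<notin> \<Union>S" using sub n_notin by blast
  moreover have "n \<notin> ladder_vertices n" by (simp add: ladder_vertices_def)
  moreover have "y \<in> ladder_vertices n" using y n by (auto simp: ladder_vertices_def)
  ultimately have r: "connected_via (insert n (ladder_vertices n)) (insert {y,n} S) \<and>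
      \<not> has_cycle (insert {y,n} S)" using pendant_add[OF c a] by blast
  have "insert {y,n} S \<subseteq> ladder_edges (Suc n)" using sub y edges_Suc[OF n] by auto
  then show ?thesis using r unfolding spanning_tree_def verts_Suc mem_Collect_eq by blast
qed

lemma lower: assumes n: "2 \<le> n" shows "2 * tau_ladder n \<le> tau_ladder (Suc n)"
proof -
  let ?A = "insert {n-1,n} ` ST n" and ?B = "insert {n-2,n} ` ST n"
  have notin: "{n-1,n} \<notin> S" "{n-2,n} \<notin> S" if "S \<in> ST n" for S
    using that le_mem[of "{n-1,n}" n n] le_mem[of "{n-2,n}" n n] by (auto simp: spanning_tree_def)
  have inj1: "inj_on (insert {n-1,n}) (ST n)"
  proof (rule inj_onI)
    fix S S' assume "S \<in> ST n" "S' \<in> ST n" "insert {n-1,n} S = insert {n-1,n} S'"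
    then have "insert {n-1,n} S - {{n-1,n}} = insert {n-1,n} S' - {{n-1,n}}" by simp
    then show "S = S'" using notin(1)[OF \<open>S \<in> ST n\<close>] notin(1)[OF \<open>S' \<in> ST n\<close>]
      by (metis Diff_insert_absorb)
  qed
  have inj2: "inj_on (insert {n-2,n}) (ST n)"
  proof (rule inj_onI)
    fix S S' assume "S \<in> ST n" "S' \<in> ST n" "insert {n-2,n} S = insert {n-2,n} S'"
    then have "insert {n-2,n} S - {{n-2,n}} = insert {n-2,n} S' - {{n-2,n}}" by simp
    then show "S = S'" using notin(2)[OF \<open>S \<in> ST n\<close>] notin(2)[OF \<open>S' \<in> ST n\<close>]
      by (metis Diff_insert_absorb)
  qed
  have ne: "{n-1,n} \<noteq> {n-2,n}" using n by (auto simp: doubleton_eq_iff)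
  have disj: "?A \<inter> ?B = {}"
  proof -
    have "{n-1,n} \<notin> insert {n-2,n} S" if "S \<in> ST n" for S using notin(1)[OF that] ne by auto
    then show ?thesis by auto
  qed
  have cA: "card ?A = card (ST n)" using inj1 by (simp add: card_image)
  have cB: "card ?B = card (ST n)" using inj2 by (simp add: card_image)
  have sub: "?A \<union> ?B \<subseteq> ST (Suc n)" using add_ok[OF n] by blast
  have "card (?A \<union> ?B) = card ?A + card ?B"
    by (rule card_Un_disjoint) (use finite_ST disj in auto)
  also have "\<dots> = 2 * card (ST n)" using cA cB by simp
  finally have "2 * card (ST n) \<le> card (ST (Suc n))"
    using card_mono[OF finite_ST sub] by simp
  then show ?thesis by (simp add: tau_card)
qed



lemma ST_Suc_facts:
  assumes n: "2 \<le> n" and T: "T \<in> ST (Suc n)"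
  shows "T \<subseteq> insert {n-1,n} (insert {n-2,n} (ladder_edges n))"
    and "connected_via (insert n (ladder_vertices n)) T"
    and "\<not> has_cycle T"
    and "\<And>e. e \<in> T \<Longrightarrow> n \<in> e \<Longrightarrow> e = {n-1,n} \<or> e = {n-2,n}"
proof -
  show sub: "T \<subseteq> insert {n-1,n} (insert {n-2,n} (ladder_edges n))"
    using T edges_Suc[OF n] by (simp add: spanning_tree_def)
  show "connected_via (insert n (ladder_vertices n)) T"
    using T by (simp add: spanning_tree_def verts_Suc)
  show "\<not> has_cycle T" using T by (simp add: spanning_tree_def)
  fix e assume "e \<in> T" "n \<in> e"
  moreover have "e \<notin> ladder_edges n" using le_mem[of e n n] \<open>n \<in> e\<close> by blast
  ultimately show "e = {n-1,n} \<or> e = {n-2,n}" using sub by blast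
qed

lemma remove_ok:
  assumes n: "2 \<le> n" and T: "T \<in> ST (Suc n)" and y: "y = n - 1 \<or> y = n - 2"
    and only: "\<And>e. e \<in> T \<Longrightarrow> n \<in> e \<Longrightarrow> e = {y,n}"
  shows "T - {{y,n}} \<in> ST n"
proof -
  note f = ST_Suc_facts[OF n T]
  have "n \<notin> ladder_vertices n" by (simp add: ladder_vertices_def)
  then have r: "connected_via (ladder_vertices n) (T - {{y,n}}) \<and> \<not> has_cycle (T - {{y,n}})"
    using pendant_remove[OF f(2) f(3)] only by blast
  have "T - {{y,n}} \<subseteq> ladder_edges n"
  proof
    fix e assume e: "e \<in> T - {{y,n}}"
    then have "n \<notin> e" using only by blast
    moreover have "e \<in> insert {n-1,n} (insert {n-2,n} (ladder_edges n))" using e f(1) by blast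
    ultimately show "e \<in> ladder_edges n" by auto
  qed
  then show ?thesis using r unfolding spanning_tree_def mem_Collect_eq by blast
qed

lemma upper: assumes n: "2 \<le> n" shows "tau_ladder (Suc n) \<le> 3 * tau_ladder n"
proof -
  let ?e1 = "{n-1,n}" and ?e2 = "{n-2,n}" and ?m = "{n-1,n-2}"
  define P1 where "P1 = {T \<in> ST (Suc n). ?e1 \<in> T \<and> ?e2 \<notin> T}"
  define P2 where "P2 = {T \<in> ST (Suc n). ?e2 \<in> T \<and> ?e1 \<notin> T}"
  define D where "D = {T \<in> ST (Suc n). ?e1 \<in> T \<and> ?e2 \<in> T}"
  have ne: "?e1 \<noteq> ?e2" using n by (auto simp: doubleton_eq_iff)
  have cover: "ST (Suc n) \<subseteq> P1 \<union> P2 \<union> D"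
  proof
    fix T assume T: "T \<in> ST (Suc n)"
    note f = ST_Suc_facts[OF n T]
    have "?e1 \<in> T \<or> ?e2 \<in> T"
    proof -
      have "n \<in> insert n (ladder_vertices n)" "n - 1 \<in> insert n (ladder_vertices n)"
        using n by (auto simp: ladder_vertices_def)
      then have "(n, n-1) \<in> (adj_rel T)\<^sup>*" using f(2) unfolding connected_via_def by blast
      moreover have "n \<noteq> n - 1" using n by simp
      ultimately obtain w where "{n,w} \<in> T" by (meson has_edge)
      then have "{n,w} = ?e1 \<or> {n,w} = ?e2" using f(4) by blast
      then show ?thesis using \<open>{n,w} \<in> T\<close> by metis
    qed
    then show "T \<in> P1 \<union> P2 \<union> D" using T unfolding P1_def P2_def D_def by blast
  qed
  have c1: "card P1 \<le> card (ST n)"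
  proof (rule card_inj_on_le[OF _ _ finite_ST])
    show "inj_on (\<lambda>T. T - {?e1}) P1"
      by (rule inj_on_inverseI[where g = "insert ?e1"]) (auto simp: P1_def)
    show "(\<lambda>T. T - {?e1}) ` P1 \<subseteq> ST n"
    proof
      fix S assume "S \<in> (\<lambda>T. T - {?e1}) ` P1"
      then obtain T where T: "T \<in> P1" "S = T - {?e1}" by blast
      have TS: "T \<in> ST (Suc n)" using T by (simp add: P1_def)
      have "\<And>e. e \<in> T \<Longrightarrow> n \<in> e \<Longrightarrow> e = ?e1" using ST_Suc_facts(4)[OF n TS] T(1)
        unfolding P1_def by blast
      then show "S \<in> ST n" using remove_ok[OF n TS, of "n-1"] T(2) by blast
    qed
  qed
  have c2: "card P2 \<le> card (ST n)"
  proof (rule card_inj_on_le[OF _ _ finite_ST])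
    show "inj_on (\<lambda>T. T - {?e2}) P2"
      by (rule inj_on_inverseI[where g = "insert ?e2"]) (auto simp: P2_def)
    show "(\<lambda>T. T - {?e2}) ` P2 \<subseteq> ST n"
    proof
      fix S assume "S \<in> (\<lambda>T. T - {?e2}) ` P2"
      then obtain T where T: "T \<in> P2" "S = T - {?e2}" by blast
      have TS: "T \<in> ST (Suc n)" using T by (simp add: P2_def)
      have "\<And>e. e \<in> T \<Longrightarrow> n \<in> e \<Longrightarrow> e = ?e2" using ST_Suc_facts(4)[OF n TS] T(1)
        unfolding P2_def by blast
      then show "S \<in> ST n" using remove_ok[OF n TS, of "n-2"] T(2) by blast
    qed
  qed
  have mT: "?m \<notin> T" if "T \<in> D" for T
  proof
    assume "?m \<in> T"
    moreover have "?e1 \<in> T" "?e2 \<in> T" using that by (auto simp: D_def)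
    moreover have "distinct [n, n-1, n-2]" using n by auto
    ultimately have "has_cycle T" using triangle[of n "n-1" T "n-2"] by (simp add: insert_commute)
    then show False using that by (simp add: D_def spanning_tree_def)
  qed
  have mne: "?m \<noteq> ?e1" "?m \<noteq> ?e2" using n by (auto simp: doubleton_eq_iff)
  have c3: "card D \<le> card (ST n)"
  proof (rule card_inj_on_le[OF _ _ finite_ST])
    show "inj_on (\<lambda>T. insert ?m (T - {?e1, ?e2})) D"
    proof (rule inj_on_inverseI[where g = "\<lambda>S. insert ?e1 (insert ?e2 (S - {?m}))"])
      fix T assume T: "T \<in> D"
      have "insert ?m (T - {?e1, ?e2}) - {?m} = T - {?e1, ?e2}" using mT[OF T] by auto
      then show "insert ?e1 (insert ?e2 (insert ?m (T - {?e1, ?e2}) - {?m})) = T"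
        using T by (auto simp: D_def)
    qed
    show "(\<lambda>T. insert ?m (T - {?e1, ?e2})) ` D \<subseteq> ST n"
    proof
      fix S assume "S \<in> (\<lambda>T. insert ?m (T - {?e1, ?e2})) ` D"
      then obtain T where T: "T \<in> D" "S = insert ?m (T - {?e1, ?e2})" by blast
      have TS: "T \<in> ST (Suc n)" and inT: "?e1 \<in> T" "?e2 \<in> T" using T by (auto simp: D_def)
      note f = ST_Suc_facts[OF n TS]
      have "n \<notin> ladder_vertices n" "n - 1 \<in> ladder_vertices n" "n - 2 \<in> ladder_vertices n"
        using n by (auto simp: ladder_vertices_def)
      moreover have "n - 1 \<noteq> n - 2" using n by simp
      ultimately have r: "connected_via (ladder_vertices n) S \<and> \<not> has_cycle S"
        using deg2[OF f(2) f(3), of "n-1" "n-2"] f(4) inT T(2) by blast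
      have "T - {?e1, ?e2} \<subseteq> ladder_edges n" using f(1) by blast
      then have "S \<subseteq> ladder_edges n" using T(2) edge_mid[OF n] by blast
      then show "S \<in> ST n" using r unfolding spanning_tree_def mem_Collect_eq by blast
    qed
  qed
  have "card (ST (Suc n)) \<le> card (P1 \<union> P2 \<union> D)"
    by (rule card_mono) (use cover finite_ST in \<open>auto simp: P1_def P2_def D_def\<close>)
  also have "\<dots> \<le> card P1 + card P2 + card D"
    by (meson card_Un_le add_le_mono order_trans le_refl)
  also have "\<dots> \<le> 3 * card (ST n)" using c1 c2 c3 by linarith
  finally show ?thesis by (simp add: tau_card)
qed


lemma chain:
  assumes "2 \<le> m"
  shows "2 ^ k * tau_ladder m \<le> tau_ladder (m + k) \<and> tau_ladder (m + k) \<le> 3 ^ k * tau_ladder m"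
proof (induction k)
  case 0
  then show ?case by simp
next
  case (Suc k)
  have m: "2 \<le> m + k" using assms by simp
  have l: "2 * tau_ladder (m + k) \<le> tau_ladder (Suc (m + k))" by (rule lower[OF m])
  have u: "tau_ladder (Suc (m + k)) \<le> 3 * tau_ladder (m + k)" by (rule upper[OF m])
  have "2 ^ Suc k * tau_ladder m = 2 * (2 ^ k * tau_ladder m)" by simp
  also have "\<dots> \<le> 2 * tau_ladder (m + k)" using Suc.IH by simp
  finally have a: "2 ^ Suc k * tau_ladder m \<le> tau_ladder (m + Suc k)" using l by simp
  have "3 * tau_ladder (m + k) \<le> 3 * (3 ^ k * tau_ladder m)" using Suc.IH by simp
  then have b: "tau_ladder (m + Suc k) \<le> 3 ^ Suc k * tau_ladder m" using u by simp
  show ?case using a b by simp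
qed

theorem mainTheorem10:
  fixes n1 n2 :: nat
  assumes "n1 > n2" and "n2 > 1"
  shows "2 ^ (n1 - n2) * tau_ladder n2 \<le> tau_ladder n1 \<and>
         tau_ladder n1 \<le> 3 ^ (n1 - n2) * tau_ladder n2"
proof -
  have "2 \<le> n2" using assms by simp
  from chain[OF this, of "n1 - n2"] show ?thesis using assms by simp
qed

end
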